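(* Let $p>3$ be prime, $t\in\{1,3,p,3p\}$, and $1\le r\le 3p-1$ with $\gcd(r,3p)=1$. Then \[\Lambda(1,r,t)=\begin{cases}\emptyset & \text{if } r\equiv 1\pmod 3,\\ \{\ell\in\Delta(|r|_p): \ell\text{ odd}\} & \text{if } r\equiv 2\pmod 3.\end{cases}\]
   Context: $|r|_m$ is the multiplicative order of $r$ modulo $m$ (with $|r|_1=1$). $S_k(x):=1+x+\cdots+x^{k-1}$, $S_0:=0$. For $m\ge1$ with $\gcd(r,m)=1$, $\kappa(m,r,t):=\dfrac{m|r|_m}{\gcd(m,\,tS_{|r|_m}(r))}$. For $d\in\{1,3,p,3p\}$, $\Lambda(d,r,t):=\{\ell>0:\ \ell \text{ divides } \frac{|r|_{3p}}{\gcd(\kappa(d,r,t),|r|_{3p})}\text{ and }\gcd(r^{\ell\kappa(d,r,t)}-1,3p)=d\}$. For a positive integer $m$, $\Delta(m):=\{\ell: 0<\ell<m,\ \ell\mid m\}$ (proper positive divisors of $m$). *)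

theory Defs
  imports "HOL-Number_Theory.Number_Theory"
begin

text \<open>Multiplicative order: the library's ord m r (with ord 1 r = 1).
  S k x = 1 + x + ... + x^(k-1), S 0 x = 0.\<close>

definition S :: "nat \<Rightarrow> nat \<Rightarrow> nat" where
  "S k x = (\<Sum>i<k. x ^ i)"

definition kappa :: "nat \<Rightarrow> nat \<Rightarrow> nat \<Rightarrow> nat" where
  "kappa m r t = (m * ord m r) div gcd m (t * S (ord m r) r)"

definition Lambda :: "nat \<Rightarrow> nat \<Rightarrow> nat \<Rightarrow> nat \<Rightarrow> nat set" where
  "Lambda p d r t = {l. l > 0 \<and>
     l dvd (ord (3*p) r div gcd (kappa d r t) (ord (3*p) r)) \<and>
     gcd (r ^ (l * kappa d r t) - 1) (3*p) = d}"

definition Delta :: "nat \<Rightarrow> nat set" where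
  "Delta m = {l. 0 < l \<and> l < m \<and> l dvd m}"

end

theory Submission
  imports Defs
begin

lemma pow2mod3: "(2::nat)^l mod 3 = (if even l then 1 else 2)"
proof (induction l)
  case (Suc l)
  have "(2::nat)^Suc l mod 3 = (2 * (2^l mod 3)) mod 3" by (simp add: mod_mult_right_eq)
  with Suc show ?case by auto
qed simp

lemma p3: "prime (3::nat)"
proof -
  have "{2..<3::nat} = {2}" by auto
  thus ?thesis by (simp add: prime_nat_iff')
qed
lemma cop_prime: "prime (q::nat) \<Longrightarrow> coprime x q \<longleftrightarrow> \<not> q dvd x"
proof
  assume q: "prime q" "coprime x q"
  show "\<not> q dvd x"
  proof
    assume "q dvd x"
    hence "is_unit q" using coprime_common_divisor[OF q(2)] by simp
    thus False using q(1) not_prime_unit by blast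
  qed
next
  assume "prime q" "\<not> q dvd x"
  thus "coprime x q" using prime_imp_coprime[of q x] by (simp add: coprime_commute)
qed

lemma gcd3p: "prime (p::nat) \<Longrightarrow> gcd x (3*p) = 1 \<longleftrightarrow> \<not> 3 dvd x \<and> \<not> p dvd x"
proof -
  assume p: "prime p"
  have "gcd x (3*p) = 1 \<longleftrightarrow> coprime x (3*p)" by (rule coprime_iff_gcd_eq_1[symmetric])
  also have "\<dots> \<longleftrightarrow> coprime x 3 \<and> coprime x p" by (rule coprime_mult_right_iff)
  also have "coprime x 3 \<longleftrightarrow> \<not> 3 dvd x" by (rule cop_prime[OF p3])
  also have "coprime x p \<longleftrightarrow> \<not> p dvd x" by (rule cop_prime[OF p])
  finally show ?thesis .
qed

theorem lemma5p2:
  fixes p r t :: nat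
  assumes "prime p" and "p > 3"
    and "t \<in> {1, 3, p, 3*p}"
    and "1 \<le> r" and "r \<le> 3*p - 1" and "coprime r (3*p)"
  shows "(r mod 3 = 1 \<longrightarrow> Lambda p 1 r t = {})
       \<and> (r mod 3 = 2 \<longrightarrow> Lambda p 1 r t = {l \<in> Delta (ord p r). odd l})"
proof -
  have k: "kappa 1 r t = 1" by (simp add: kappa_def)
  have L: "Lambda p 1 r t = {l. l > 0 \<and> l dvd ord (3*p) r \<and> \<not> 3 dvd (r^l - 1) \<and> \<not> p dvd (r^l - 1)}"
    unfolding Lambda_def k using gcd3p[OF assms(1)] by simp
  have r1: "1 \<le> r^l" for l using assms(4) by simp
  have c3: "3 dvd (r^l - 1) \<longleftrightarrow> [r^l = 1] (mod 3)" for l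
    using cong_altdef_nat[OF r1[of l], of 3] by simp
  have cp: "p dvd (r^l - 1) \<longleftrightarrow> ord p r dvd l" for l
    using cong_altdef_nat[OF r1[of l], of p] ord_divides[of r l p] by simp
  have copp: "coprime p r" using assms(6) by (simp add: coprime_commute)
  have cop3: "coprime 3 r" using assms(6) by (simp add: coprime_commute)
  have op: "ord p r > 0" using copp by simp
  show ?thesis
  proof (intro conjI impI)
    assume "r mod 3 = 1"
    hence "[r^l = 1] (mod 3)" for l
      by (metis cong_def cong_pow mod_mod_trivial power_one)
    thus "Lambda p 1 r t = {}" unfolding L c3 by auto
  next
    assume r2: "r mod 3 = 2"
    have m3: "[r^l = 1] (mod 3) \<longleftrightarrow> even l" for l
    proof -
      have "r^l mod 3 = 2^l mod 3" using power_mod[of r 3 l] r2 by simp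
      thus ?thesis using pow2mod3[of l] unfolding cong_def by simp
    qed
    have d1: "ord p r dvd ord (3*p) r"
    proof -
      have "[r^ord (3*p) r = 1] (mod 3*p)" by (rule ord)
      hence "[r^ord (3*p) r = 1] (mod p)" using cong_dvd_modulus_nat[of _ _ "3*p" p] by simp
      thus ?thesis using ord_divides[of r "ord (3*p) r" p] by simp
    qed
    have d2: "ord (3*p) r dvd 2 * ord p r"
    proof -
      have a3: "[r^(2*ord p r) = 1] (mod 3)" using m3 by simp
      have ap: "[r^(2*ord p r) = 1] (mod p)"
        using ord_divides[of r "2*ord p r" p] by simp
      have np: "\<not> p dvd 3" using assms(2) dvd_imp_le[of p 3] by linarith
      have c3p: "coprime 3 p" using cop_prime[OF assms(1), of 3] np by simp
      have "[r^(2*ord p r) = 1] (mod 3*p)"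
        using coprime_cong_mult_nat[OF a3 ap c3p] .
      thus ?thesis using ord_divides[of r "2*ord p r" "3*p"] by blast
    qed
    show "Lambda p 1 r t = {l \<in> Delta (ord p r). odd l}"
      unfolding L c3 m3 cp Delta_def
    proof (intro Set.set_eqI iffI)
      fix l assume "l \<in> {l. 0 < l \<and> l dvd ord (3*p) r \<and> odd l \<and> \<not> ord p r dvd l}"
      hence h: "0 < l" "l dvd ord (3*p) r" "odd l" "\<not> ord p r dvd l" by simp_all
      have "l dvd 2 * ord p r" using d2 h(2) dvd_trans by blast
      moreover have "coprime l 2" using h(3) by simp
      ultimately have "l dvd ord p r" using coprime_dvd_mult_right_iff by blast
      moreover have "l \<noteq> ord p r" using h(4) by auto
      moreover have "l \<le> ord p r" using op calculation(1) dvd_imp_le by blast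
      ultimately show "l \<in> {l \<in> {l. 0 < l \<and> l < ord p r \<and> l dvd ord p r}. odd l}"
        using h by simp
    next
      fix l assume "l \<in> {l \<in> {l. 0 < l \<and> l < ord p r \<and> l dvd ord p r}. odd l}"
      hence h: "0 < l" "l < ord p r" "l dvd ord p r" "odd l" by simp_all
      have "l dvd ord (3*p) r" using d1 h(3) dvd_trans by blast
      moreover have "\<not> ord p r dvd l" using h(1,2) dvd_imp_le by (meson leD)
      ultimately show "l \<in> {l. 0 < l \<and> l dvd ord (3*p) r \<and> odd l \<and> \<not> ord p r dvd l}"
        using h by simp
    qed
  qed
qed

end
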